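(* Let $\alpha\in[0,1]$, $m\ge1$, $n_1,n_2\ge3$, and let $H_1$ be a graph on $n-n_1-n_2$ vertices. Let $H'=C_{n_1}\cup C_{n_2}\cup H_1$ and $H''=C_{n_1+n_2}\cup H_1$. Then $\lambda_1(A_\alpha(K_m\vee H'))=\lambda_1(A_\alpha(K_m\vee H''))$.
   Context: All graphs are finite, simple and undirected. $A_\alpha(G)=\alpha D(G)+(1-\alpha)A(G)$ with $A(G)$ the adjacency and $D(G)$ the degree matrix; $\lambda_1$ denotes the largest eigenvalue. $C_k$ is the cycle on $k$ vertices, $\cup$ disjoint union, $K_m$ the complete graph, and $\vee$ the join (disjoint union plus all edges between the two vertex sets). *)

theory Defs
  imports "Jordan_Normal_Form.Char_Poly"
begin

text \<open>A finite simple graph is represented by its number of vertices N, the vertex set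
  being {0..<N}, together with an adjacency predicate E.\<close>

type_synonym graph = "nat \<times> (nat \<Rightarrow> nat \<Rightarrow> bool)"

definition nverts :: "graph \<Rightarrow> nat" where "nverts G = fst G"
definition adj :: "graph \<Rightarrow> nat \<Rightarrow> nat \<Rightarrow> bool" where "adj G = snd G"

definition simple_graph :: "graph \<Rightarrow> bool" where
  "simple_graph G \<longleftrightarrow> (\<forall>i j. adj G i j \<longrightarrow> i < nverts G \<and> j < nverts G \<and> i \<noteq> j \<and> adj G j i)"

definition cycle_graph :: "nat \<Rightarrow> graph" where
  "cycle_graph k = (k, \<lambda>i j. i < k \<and> j < k \<and> i \<noteq> j \<and> (j = (i + 1) mod k \<or> i = (j + 1) mod k))"

definition complete_graph :: "nat \<Rightarrow> graph" where
  "complete_graph m = (m, \<lambda>i j. i < m \<and> j < m \<and> i \<noteq> j)"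

definition disj_union :: "graph \<Rightarrow> graph \<Rightarrow> graph" where
  "disj_union G H = (nverts G + nverts H, \<lambda>i j.
     (i < nverts G \<and> j < nverts G \<and> adj G i j) \<or>
     (nverts G \<le> i \<and> nverts G \<le> j \<and> adj H (i - nverts G) (j - nverts G)))"

definition graph_join :: "graph \<Rightarrow> graph \<Rightarrow> graph" where
  "graph_join G H = (nverts G + nverts H, \<lambda>i j.
     adj (disj_union G H) i j \<or>
     (i < nverts G \<and> nverts G \<le> j \<and> j < nverts G + nverts H) \<or>
     (j < nverts G \<and> nverts G \<le> i \<and> i < nverts G + nverts H))"

definition degree :: "graph \<Rightarrow> nat \<Rightarrow> nat" where
  "degree G i = card {j. j < nverts G \<and> adj G i j}"

definition A_alpha :: "real \<Rightarrow> graph \<Rightarrow> real mat" where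
  "A_alpha \<alpha> G = mat (nverts G) (nverts G) (\<lambda>(i, j).
     (if i = j then \<alpha> * real (degree G i) else 0) + (1 - \<alpha>) * (if adj G i j then 1 else 0))"

definition lambda1 :: "real mat \<Rightarrow> real" where
  "lambda1 M = Max {x. eigenvalue M x}"

end

theory Submission
  imports Defs "HOL-Analysis.Analysis"
begin


definition bil :: "(nat\<Rightarrow>nat\<Rightarrow>real) \<Rightarrow> nat \<Rightarrow> (nat\<Rightarrow>real) \<Rightarrow> (nat\<Rightarrow>real) \<Rightarrow> real" where
  "bil a N f g = (\<Sum>i<N. \<Sum>j<N. f i * a i j * g j)"
definition nrm :: "nat \<Rightarrow> (nat\<Rightarrow>real) \<Rightarrow> real" where
  "nrm N f = (\<Sum>i<N. (f i)^2)"

lemma quad_lemma: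
  fixes r c :: real
  assumes "\<And>x. 2*x*r + x^2*c \<le> 0" "r \<ge> 0" shows "r = 0"
proof (rule ccontr)
  assume "r \<noteq> 0" hence rp: "r > 0" using assms by auto
  define y where "y = r/(\<bar>c\<bar>+1)"
  have sp: "y > 0" using rp by (simp add: y_def add_pos_nonneg)
  have "y * \<bar>c\<bar> < r" unfolding y_def using rp
    by (simp add: field_simps) 
  hence "y^2*\<bar>c\<bar> < y * r" using sp by (simp add: power2_eq_square mult.assoc)
  moreover have "- (y^2*\<bar>c\<bar>) \<le> y^2*c" using mult_left_mono[of "-\<bar>c\<bar>" c "y^2"] by simp
  moreover have "y*r > 0" using sp rp by simp
  moreover have "2*y*r = 2*(y*r)" by simp
  ultimately have "2*y*r + y^2*c > 0" by linarith
  thus False using assms(1)[of y] by simp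
qed

lemma nrm_zero: "nrm N f = 0 \<Longrightarrow> i < N \<Longrightarrow> f i = 0"
  unfolding nrm_def by (subst (asm) sum_nonneg_eq_0_iff) auto

lemma nrm_ge: "i < N \<Longrightarrow> (f i)^2 \<le> nrm N f"
  unfolding nrm_def by (rule member_le_sum) auto

lemma bil_zero: "(\<And>i. i<N \<Longrightarrow> f i = 0) \<Longrightarrow> bil a N f g = 0"
  unfolding bil_def by simp


lemma cont_coord[continuous_intros]: "continuous_on S (\<lambda>f::nat\<Rightarrow>real. f i)"
  by (rule continuous_on_subset[OF continuous_on_product_coordinates]) simp

lemma bil_expand: "bil a N (\<lambda>i. f i + z*g i) (\<lambda>i. f i + z*g i) =
   bil a N f f + z * bil a N f g + z * bil a N g f + z^2 * bil a N g g"
  unfolding bil_def by (simp add: algebra_simps sum.distrib sum_distrib_left power2_eq_square)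

lemma nrm_expand: "nrm N (\<lambda>i. f i + z*g i) = nrm N f + 2*z*(\<Sum>i<N. f i * g i) + z^2 * nrm N g"
  unfolding nrm_def by (simp add: algebra_simps sum.distrib sum_distrib_left power2_eq_square)

lemma bil_scale: "bil a N (\<lambda>i. c * f i) (\<lambda>i. c * f i) = c^2 * bil a N f f"
  unfolding bil_def by (simp add: algebra_simps sum_distrib_left power2_eq_square)

lemma nrm_scale: "nrm N (\<lambda>i. c * f i) = c^2 * nrm N f"
  unfolding nrm_def by (simp add: algebra_simps sum_distrib_left power2_eq_square)

lemma bil_sym: assumes "\<And>i j. i<N \<Longrightarrow> j<N \<Longrightarrow> a i j = a j i"
  shows "bil a N f g = bil a N g f"
proof -
  have "bil a N f g = (\<Sum>j<N. \<Sum>i<N. f i * a i j * g j)" unfolding bil_def by (rule sum.swap)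
  also have "\<dots> = bil a N g f" unfolding bil_def
    by (intro sum.cong refl) (simp add: assms mult.commute)
  finally show ?thesis .
qed

lemma nrm_nonneg: "nrm N f \<ge> 0" unfolding nrm_def by (simp add: sum_nonneg)

lemma exists_eig_gt:
  fixes a :: "nat \<Rightarrow> nat \<Rightarrow> real"
  assumes sym: "\<And>i j. i<N \<Longrightarrow> j<N \<Longrightarrow> a i j = a j i"
    and u: "bil a N u u > t * nrm N u"
  shows "\<exists>x v. x > t \<and> (\<exists>i<N. v i \<noteq> 0) \<and> (\<forall>i<N. (\<Sum>j<N. a i j * v j) = x * v i)"
proof -
  have "N > 0" using u by (cases N) (auto simp: bil_def nrm_def)
  define B where "B = (\<lambda>i::nat. if i < N then {-1..1::real} else {0})"
  define K where "K = PiE UNIV B \<inter> {f. nrm N f = 1}"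
  have cK: "compact K"
  proof -
    have "compactin (product_topology (\<lambda>_. euclidean) UNIV) (PiE UNIV B)"
      by (subst compactin_PiE) (auto simp: B_def)
    hence "compact (PiE UNIV B)" by (simp add: euclidean_product_topology)
    moreover have "closed {f::nat\<Rightarrow>real. nrm N f = 1}"
      unfolding nrm_def by (intro closed_Collect_eq continuous_intros)
    ultimately show ?thesis unfolding K_def by (rule compact_Int_closed)
  qed
  define e where "e = (\<lambda>i::nat. if i = 0 then 1 else (0::real))"
  have "e \<in> PiE UNIV B" unfolding e_def B_def using \<open>N > 0\<close> by (auto simp: PiE_iff)
  moreover have "nrm N e = 1"
  proof -
    have "nrm N e = sum e {..<N}" unfolding nrm_def by (rule sum.cong) (auto simp: e_def)
    thus ?thesis using \<open>N > 0\<close> by (simp add: e_def)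
  qed
  ultimately have "e \<in> K" unfolding K_def by auto
  hence Kne: "K \<noteq> {}" by auto
  have "continuous_on K (\<lambda>f. bil a N f f)" unfolding bil_def by (intro continuous_intros)
  then obtain x where xK: "x \<in> K" and xmax: "\<And>y. y \<in> K \<Longrightarrow> bil a N y y \<le> bil a N x x"
    using continuous_attains_sup[OF cK Kne] by blast
  define l where "l = bil a N x x"
  have x0: "x i = 0" if "i \<ge> N" for i
  proof -
    have "x i \<in> B i" using xK by (auto simp: K_def PiE_iff)
    thus ?thesis using that by (simp add: B_def)
  qed
  have nx: "nrm N x = 1" using xK unfolding K_def by auto
  have bound: "bil a N f f \<le> l * nrm N f" if f0: "\<And>i. i \<ge> N \<Longrightarrow> f i = 0" for f
  proof (cases "nrm N f = 0")
    case True
    then show ?thesis using bil_zero[of N f a f] nrm_zero[OF True] by simp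
  next
    case False
    hence np: "nrm N f > 0" using nrm_nonneg[of N f] by linarith
    define c where "c = 1 / sqrt (nrm N f)"
    have c2: "c^2 = 1 / nrm N f" unfolding c_def using np by (simp add: power_divide)
    define g where "g = (\<lambda>i. c * f i)"
    have ng: "nrm N g = 1" unfolding g_def nrm_scale c2 using np by simp
    have "g \<in> PiE UNIV B"
    proof -
      have "g i \<in> B i" for i
      proof (cases "i < N")
        case True
        have "(g i)^2 \<le> 1" using nrm_ge[OF True, of g] ng by simp
        hence "\<bar>g i\<bar> \<le> 1" by (simp add: abs_square_le_1)
        then show ?thesis using True unfolding B_def by auto
      next
        case False then show ?thesis using f0 unfolding B_def g_def by auto
      qed
      thus ?thesis by (auto simp: PiE_iff)
    qed
    hence "g \<in> K" using ng unfolding K_def by auto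
    hence "bil a N g g \<le> l" using xmax unfolding l_def by blast
    hence "bil a N f f / nrm N f \<le> l" unfolding g_def bil_scale c2 by simp
    thus ?thesis using np by (simp add: divide_le_eq mult.commute)
  qed
  define y where "y = (\<lambda>i. if i<N then (\<Sum>j<N. a i j * x j) - l * x i else 0)"
  have bx: "bil a N y x - l * (\<Sum>i<N. x i * y i) = nrm N y"
  proof -
    have "bil a N y x = (\<Sum>i<N. y i * (\<Sum>j<N. a i j * x j))" unfolding bil_def
      by (simp add: sum_distrib_left mult.assoc)
    thus ?thesis unfolding nrm_def y_def
      by (simp add: sum_distrib_left sum_subtractf[symmetric] power2_eq_square algebra_simps)
  qed
  have var: "2*z*nrm N y + z^2*(bil a N y y - l * nrm N y) \<le> 0" for z
  proof -
    have "bil a N (\<lambda>i. x i + z*y i) (\<lambda>i. x i + z*y i) \<le> l * nrm N (\<lambda>i. x i + z*y i)"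
      by (rule bound) (simp add: x0 y_def)
    thus ?thesis unfolding bil_expand nrm_expand using bil_sym[OF sym, where f=x and g=y] bx nx
      unfolding l_def[symmetric] by (simp add: algebra_simps)
  qed
  have "nrm N y = 0" by (rule quad_lemma[OF var nrm_nonneg])
  hence eig: "\<forall>i<N. (\<Sum>j<N. a i j * x j) = l * x i" using nrm_zero unfolding y_def by fastforce
  have nz: "\<exists>i<N. x i \<noteq> 0"
  proof (rule ccontr)
    assume "\<not> ?thesis" hence "nrm N x = 0" unfolding nrm_def by auto
    thus False using nx by simp
  qed
  define u0 where "u0 = (\<lambda>i. if i < N then u i else 0)"
  have "bil a N u0 u0 = bil a N u u" "nrm N u0 = nrm N u" unfolding u0_def bil_def nrm_def by auto
  moreover have "bil a N u0 u0 \<le> l * nrm N u0" by (rule bound) (simp add: u0_def)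
  moreover have "nrm N u \<noteq> 0"
  proof
    assume "nrm N u = 0" hence "bil a N u u = 0" using bil_zero nrm_zero by blast
    thus False using u \<open>nrm N u = 0\<close> by simp
  qed
  ultimately have "bil a N u u \<le> l * nrm N u" by simp
  hence "l * nrm N u > t * nrm N u" using u by linarith
  hence "l > t" using nrm_nonneg[of N u] \<open>nrm N u \<noteq> 0\<close> by (simp add: mult_less_cancel_right)
  show ?thesis
    apply (rule exI[of _ l], rule exI[of _ x])
    using \<open>l > t\<close> eig nz by simp
qed



definition eigf :: "(nat\<Rightarrow>nat\<Rightarrow>real) \<Rightarrow> nat \<Rightarrow> real \<Rightarrow> bool" where
  "eigf a N x \<longleftrightarrow> (\<exists>v. (\<exists>i<N. v i \<noteq> 0) \<and> (\<forall>i<N. (\<Sum>j<N. a i j * v j) = x * v i))"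
definition eigc :: "(nat\<Rightarrow>nat\<Rightarrow>real) \<Rightarrow> nat \<Rightarrow> nat set \<Rightarrow> real \<Rightarrow> bool" where
  "eigc a N S x \<longleftrightarrow> (\<exists>v. (\<exists>i<N. v i \<noteq> 0) \<and> (\<forall>i\<in>S. \<forall>j\<in>S. v i = v j) \<and>
       (\<forall>i<N. (\<Sum>j<N. a i j * v j) = x * v i))"

lemma sum_split_S: fixes N :: nat
 
  assumes "S \<subseteq> {..<N}"
  shows "(\<Sum>j<N. f j) = (\<Sum>j\<in>S. f j) + (\<Sum>j\<in>{..<N}-S. f j)"
  using sum.subset_diff[OF assms, of f] by (simp add: add.commute)

lemma sum_if_S: fixes N :: nat
 
  assumes "S \<subseteq> {..<N}"
  shows "(\<Sum>j<N. if j \<in> S then f j else 0) = (\<Sum>j\<in>S. f j)"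
  using sum.inter_restrict[of "{..<N}" f S] assms by (simp add: Int_absorb1)

lemma ind_left: fixes N :: nat
  assumes "S \<subseteq> {..<N}"
  shows "(\<Sum>j<N. (if j \<in> S then 1 else 0) * h j) = (\<Sum>j\<in>S. (h j::real))"
proof -
  have "(\<Sum>j<N. (if j \<in> S then 1 else 0) * h j) = (\<Sum>j<N. if j \<in> S then h j else 0)"
    by (rule sum.cong) auto
  thus ?thesis using sum_if_S[OF assms] by simp
qed

lemma ind_right: fixes N :: nat
  assumes "S \<subseteq> {..<N}"
  shows "(\<Sum>j<N. h j * (if j \<in> S then 1 else 0)) = (\<Sum>j\<in>S. (h j::real))"
  using ind_left[OF assms, of h] by (simp add: mult.commute)

lemma delta_left: fixes N :: nat
  assumes "i0 < N"
  shows "(\<Sum>j<N. (if j = i0 then 1 else 0) * h j) = (h i0::real)"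
proof -
  have "(\<Sum>j<N. (if j = i0 then 1 else 0) * h j) = (\<Sum>j<N. if j = i0 then h j else 0)"
    by (rule sum.cong) auto
  thus ?thesis using assms by simp
qed

lemma delta_right: fixes N :: nat
  assumes "i0 < N"
  shows "(\<Sum>j<N. h j * (if j = i0 then 1 else 0)) = (h i0::real)"
  using delta_left[OF assms, of h] by (simp add: mult.commute)

locale setting =
  fixes a :: "nat \<Rightarrow> nat \<Rightarrow> real" and N :: nat and S :: "nat set" and t :: real
  assumes sym: "\<And>i j. i<N \<Longrightarrow> j<N \<Longrightarrow> a i j = a j i"
    and nonneg: "\<And>i j. i<N \<Longrightarrow> j<N \<Longrightarrow> a i j \<ge> 0"
    and SN: "S \<subseteq> {..<N}" and Sne: "S \<noteq> {}"
    and rowsum: "\<And>i. i \<in> S \<Longrightarrow> (\<Sum>j\<in>S. a i j) = t"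
    and const: "\<And>i j j'. i < N \<Longrightarrow> i \<notin> S \<Longrightarrow> j \<in> S \<Longrightarrow> j' \<in> S \<Longrightarrow> a i j = a i j'"
begin

lemma finS: "finite S" using SN finite_subset by blast

lemma decomp:
  assumes v: "\<exists>i<N. v i \<noteq> 0" and ev: "\<forall>i<N. (\<Sum>j<N. a i j * v j) = x * v i" and xt: "x > t"
  shows "eigc a N S x"
proof -
  define k where "k = real (card S)"
  have kp: "k > 0" using finS Sne unfolding k_def by (simp add: card_gt_0_iff)
  define c where "c = (\<Sum>j\<in>S. v j) / k"
  have sumS: "(\<Sum>j\<in>S. v j) = k * c" unfolding c_def using kp by simp
  define vc where "vc = (\<lambda>i. if i \<in> S then c else v i)"
  have sumSc: "(\<Sum>j\<in>S. a i j * v j) = (\<Sum>j\<in>S. a i j * c)" if "i < N" "i \<notin> S" for i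
  proof -
    obtain j0 where j0: "j0 \<in> S" using Sne by auto
    have "(\<Sum>j\<in>S. a i j * v j) = (\<Sum>j\<in>S. a i j0 * v j)"
    proof (rule sum.cong[OF refl])
      fix j assume "j \<in> S" thus "a i j * v j = a i j0 * v j" using const[OF that \<open>j\<in>S\<close> j0] by simp
    qed
    also have "\<dots> = a i j0 * (k * c)" by (simp add: sum_distrib_left[symmetric] sumS)
    also have "\<dots> = (\<Sum>j\<in>S. a i j0 * c)" by (simp add: k_def)
    also have "\<dots> = (\<Sum>j\<in>S. a i j * c)"
    proof (rule sum.cong[OF refl])
      fix j assume "j \<in> S" thus "a i j0 * c = a i j * c" using const[OF that \<open>j\<in>S\<close> j0] by simp
    qed
    finally show ?thesis .
  qed
  define r where "r = (\<lambda>i. \<Sum>j\<in>{..<N}-S. a i j * v j)"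
  obtain i0 where i0: "i0 \<in> S" using Sne by auto
  have rconst: "r i = r i0" if "i \<in> S" for i
    unfolding r_def
  proof (rule sum.cong[OF refl])
    fix j assume j: "j \<in> {..<N} - S"
    have "a i j = a j i" using sym SN that j by auto
    also have "\<dots> = a j i0" using const[of j i i0] j that i0 by auto
    also have "\<dots> = a i0 j" using sym SN i0 j by auto
    finally show "a i j * v j = a i0 j * v j" by simp
  qed
  have rowS: "(\<Sum>j<N. a i j * v j) = r i0 + (\<Sum>j\<in>S. a i j * v j)" if "i \<in> S" for i
    using sum_split_S[OF SN, of "\<lambda>j. a i j * v j"] rconst[OF that] unfolding r_def by simp
  have colsum: "(\<Sum>i\<in>S. a i j) = t" if "j \<in> S" for j
  proof -
    have "(\<Sum>i\<in>S. a i j) = (\<Sum>i\<in>S. a j i)"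
    proof (rule sum.cong[OF refl])
      fix i assume "i \<in> S" thus "a i j = a j i" using sym SN that by auto
    qed
    thus ?thesis using rowsum[OF that] by simp
  qed
  have "(\<Sum>i\<in>S. (\<Sum>j<N. a i j * v j)) = (\<Sum>i\<in>S. x * v i)"
    by (rule sum.cong[OF refl]) (use ev SN in auto)
  also have "\<dots> = x * (k * c)" by (simp add: sum_distrib_left[symmetric] sumS)
  finally have e1: "(\<Sum>i\<in>S. (\<Sum>j<N. a i j * v j)) = x * (k * c)" .
  have "(\<Sum>i\<in>S. (\<Sum>j<N. a i j * v j)) = (\<Sum>i\<in>S. r i0 + (\<Sum>j\<in>S. a i j * v j))"
    by (rule sum.cong[OF refl]) (use rowS in auto)
  also have "\<dots> = k * r i0 + (\<Sum>j\<in>S. \<Sum>i\<in>S. a i j * v j)"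
  proof -
    have "(\<Sum>i\<in>S. \<Sum>j\<in>S. a i j * v j) = (\<Sum>j\<in>S. \<Sum>i\<in>S. a i j * v j)" by (rule sum.swap)
    thus ?thesis by (simp add: sum.distrib k_def)
  qed
  also have "(\<Sum>j\<in>S. \<Sum>i\<in>S. a i j * v j) = (\<Sum>j\<in>S. t * v j)"
    by (rule sum.cong[OF refl]) (simp add: sum_distrib_right[symmetric] colsum)
  also have "\<dots> = t * (k * c)" by (simp add: sum_distrib_left[symmetric] sumS)
  finally have "k * r i0 + t * (k * c) = x * (k * c)" using e1 by simp
  hence rc: "r i0 + t * c = x * c" using kp by (simp add: algebra_simps) (metis distrib_left mult.left_commute mult_cancel_left less_irrefl)
  have evc: "\<forall>i<N. (\<Sum>j<N. a i j * vc j) = x * vc i"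
  proof (intro allI impI)
    fix i assume iN: "i < N"
    have split: "(\<Sum>j<N. a i j * vc j) = (\<Sum>j\<in>S. a i j * c) + (\<Sum>j\<in>{..<N}-S. a i j * v j)"
      using sum_split_S[OF SN, of "\<lambda>j. a i j * vc j"] unfolding vc_def by simp
    show "(\<Sum>j<N. a i j * vc j) = x * vc i"
    proof (cases "i \<in> S")
      case True
      have "(\<Sum>j\<in>S. a i j * c) = t * c" using rowsum[OF True] by (simp add: sum_distrib_right[symmetric])
      then show ?thesis using split rc rconst[OF True] True unfolding r_def vc_def by simp
    next
      case False
      have "(\<Sum>j<N. a i j * v j) = (\<Sum>j\<in>S. a i j * v j) + (\<Sum>j\<in>{..<N}-S. a i j * v j)"
        by (rule sum_split_S[OF SN])
      then show ?thesis using split sumSc[OF iN False] ev iN False unfolding vc_def by simp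
    qed
  qed
  have nz: "\<exists>i<N. vc i \<noteq> 0"
  proof (rule ccontr)
    assume "\<not> ?thesis"
    hence z: "\<And>i. i < N \<Longrightarrow> vc i = 0" by auto
    have vz: "v i = 0" if "i < N" "i \<notin> S" for i using z[OF that(1)] that unfolding vc_def by simp
    define M where "M = Max ((\<lambda>j. \<bar>v j\<bar>) ` S)"
    have Mge: "\<bar>v j\<bar> \<le> M" if "j \<in> S" for j unfolding M_def using finS that by auto
    obtain i1 where i1: "i1 \<in> S" "\<bar>v i1\<bar> = M" unfolding M_def using finS Sne
      by (metis (no_types, lifting) Max_in finite_imageI image_iff image_is_empty)
    obtain i2 where i2: "i2 < N" "v i2 \<noteq> 0" using v by auto
    have "i2 \<in> S" using vz i2 by auto
    hence Mp: "M > 0" using Mge[of i2] i2 by auto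
    have i1N: "i1 < N" using SN i1 by auto
    have "(\<Sum>j<N. a i1 j * v j) = (\<Sum>j\<in>S. a i1 j * v j)"
      using sum_split_S[OF SN, of "\<lambda>j. a i1 j * v j"] vz by simp
    hence "x * v i1 = (\<Sum>j\<in>S. a i1 j * v j)" using ev i1N by simp
    hence "\<bar>x\<bar> * M = \<bar>\<Sum>j\<in>S. a i1 j * v j\<bar>" using i1(2) by (metis abs_mult)
    also have "\<dots> \<le> (\<Sum>j\<in>S. \<bar>a i1 j * v j\<bar>)" by (rule sum_abs)
    also have "\<dots> \<le> (\<Sum>j\<in>S. a i1 j * M)"
    proof (rule sum_mono)
      fix j assume j: "j \<in> S"
      have "a i1 j \<ge> 0" using nonneg i1N SN j by auto
      thus "\<bar>a i1 j * v j\<bar> \<le> a i1 j * M" using Mge[OF j] by (simp add: abs_mult mult_left_mono)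
    qed
    also have "\<dots> = t * M" using rowsum[OF i1(1)] by (simp add: sum_distrib_right[symmetric])
    finally have "\<bar>x\<bar> * M \<le> t * M" .
    hence "\<bar>x\<bar> \<le> t" using Mp by simp
    thus False using xt by simp
  qed
  have "\<forall>i\<in>S. \<forall>j\<in>S. vc i = vc j" unfolding vc_def by simp
  thus ?thesis unfolding eigc_def using nz evc by blast
qed

lemma t_nonneg: "t \<ge> 0"
proof -
  obtain i where i: "i \<in> S" using Sne by auto
  have "(\<Sum>j\<in>S. a i j) \<ge> 0" using nonneg SN i by (intro sum_nonneg) auto
  thus ?thesis using rowsum[OF i] by simp
qed

lemma exists_big:
  assumes i0: "i0 < N" "i0 \<notin> S" and j0: "j0 \<in> S" and pos: "a i0 j0 > 0"
  shows "\<exists>x. eigf a N x \<and> x > t"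
proof -
  define k where "k = real (card S)"
  have kp: "k > 0" using finS Sne unfolding k_def by (simp add: card_gt_0_iff)
  define b where "b = a i0 j0"
  define f where "f = (\<lambda>i. if i \<in> S then 1 else (0::real))"
  define g where "g = (\<lambda>i. if i = i0 then 1 else (0::real))"
  define z where "z = k * b / (t + 1)"
  have tn: "t \<ge> 0" by (rule t_nonneg)
  have zp: "z > 0" unfolding z_def b_def using kp pos tn by simp
  have bff: "bil a N f f = k * t"
  proof -
    have "bil a N f f = (\<Sum>i<N. (if i \<in> S then 1 else 0) * (\<Sum>j\<in>S. a i j))"
      unfolding bil_def f_def ind_right[OF SN] by (simp add: sum_distrib_left mult.assoc)
    also have "\<dots> = (\<Sum>i\<in>S. (\<Sum>j\<in>S. a i j))" by (rule ind_left[OF SN])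
    also have "\<dots> = (\<Sum>i\<in>S. t)" using rowsum by simp
    finally show ?thesis by (simp add: k_def)
  qed
  have bfg: "bil a N f g = k * b"
  proof -
    have "bil a N f g = (\<Sum>i<N. (if i \<in> S then 1 else 0) * a i i0)"
      unfolding bil_def f_def g_def delta_right[OF i0(1)] ..
    also have "\<dots> = (\<Sum>i\<in>S. a i i0)" by (rule ind_left[OF SN])
    also have "\<dots> = (\<Sum>i\<in>S. b)" unfolding b_def
    proof (rule sum.cong[OF refl])
      fix i assume i: "i \<in> S"
      have "a i i0 = a i0 i" using sym SN i i0 by auto
      also have "\<dots> = a i0 j0" using const[OF i0 i j0] .
      finally show "a i i0 = a i0 j0" .
    qed
    finally show ?thesis by (simp add: k_def)
  qed
  have bgg: "bil a N g g = a i0 i0"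
    unfolding bil_def g_def delta_right[OF i0(1)] delta_left[OF i0(1)] ..
  have nf: "nrm N f = k"
  proof -
    have "nrm N f = (\<Sum>i<N. (if i \<in> S then 1 else 0) * 1)" unfolding nrm_def f_def
      by (rule sum.cong) auto
    thus ?thesis unfolding ind_left[OF SN] k_def by simp
  qed
  have fg: "(\<Sum>i<N. f i * g i) = 0" unfolding f_def g_def ind_left[OF SN] using i0 by (intro sum.neutral) auto
  have ng: "nrm N g = 1"
  proof -
    have "nrm N g = (\<Sum>i<N. (if i = i0 then 1 else 0) * 1)" unfolding nrm_def g_def
      by (rule sum.cong) auto
    thus ?thesis unfolding delta_left[OF i0(1)] by simp
  qed
  define u where "u = (\<lambda>i. f i + z * g i)"
  have bgf: "bil a N g f = k * b" using bil_sym[of N a g f] sym bfg by metis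
  have bu: "bil a N u u = k*t + 2*z*(k*b) + z^2 * a i0 i0"
    unfolding u_def bil_expand bgf bff bfg bgg by simp
  have nu: "nrm N u = k + z^2" unfolding u_def nrm_expand nf fg ng by simp
  have a00: "a i0 i0 \<ge> 0" using nonneg i0 by auto
  have kb: "k * b > 0" using kp pos unfolding b_def by simp
  have "t * z = (k * b) * (t / (t + 1))" unfolding z_def by simp
  moreover have "t / (t + 1) < 1" using tn by simp
  ultimately have tz: "t * z < k * b" using kb
    by (metis mult.right_neutral mult_strict_left_mono)
  have "z * (t * z) < z * (k * b)" by (rule mult_strict_left_mono[OF tz zp])
  moreover have "t * z^2 = z * (t * z)" by (simp add: power2_eq_square)
  moreover have "z * (k * b) > 0" using zp kb by simp
  ultimately have tz2: "t * z^2 < 2*z*(k*b)" by linarith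
  have "z^2 * a i0 i0 \<ge> 0" using a00 by simp
  moreover have "t * (k + z^2) = k*t + t*z^2" by (simp add: algebra_simps)
  ultimately have big: "bil a N u u > t * nrm N u" unfolding bu nu using tz2 by linarith
  have "\<exists>x v. x > t \<and> (\<exists>i<N. v i \<noteq> 0) \<and> (\<forall>i<N. (\<Sum>j<N. a i j * v j) = x * v i)"
    by (rule exists_eig_gt[where a=a and N=N and t=t and u=u]) (simp_all add: sym big)
  then obtain x where xt: "x > t" and
    xe: "\<exists>v. (\<exists>i<N. v i \<noteq> 0) \<and> (\<forall>i<N. (\<Sum>j<N. a i j * v j) = x * v i)" by auto
  have "eigf a N x" unfolding eigf_def by (rule xe)
  thus ?thesis using xt by auto
qed

lemma max_in_C:
  assumes fin: "finite {x. eigf a N x}"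
    and i0: "i0 < N" "i0 \<notin> S" and j0: "j0 \<in> S" and pos: "a i0 j0 > 0"
  shows "eigc a N S (Max {x. eigf a N x})"
proof -
  obtain y where y: "eigf a N y" "y > t" using exists_big[OF i0 j0 pos] by blast
  let ?m = "Max {x. eigf a N x}"
  have "?m \<in> {x. eigf a N x}" using fin y by (intro Max_in) auto
  moreover have "?m \<ge> y" using fin y by (intro Max_ge) auto
  ultimately have "eigf a N ?m" "?m > t" using y(2) by auto
  then obtain v where v1: "\<exists>i<N. v i \<noteq> 0" and v2: "\<forall>i<N. (\<Sum>j<N. a i j * v j) = ?m * v i"
    unfolding eigf_def by auto
  show ?thesis by (rule decomp[OF v1 v2 \<open>?m > t\<close>])
qed

end



lemma eigenvalue_eigf:
  fixes M :: "real mat"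
  assumes M: "M \<in> carrier_mat N N"
  shows "eigenvalue M x \<longleftrightarrow> eigf (\<lambda>i j. M $$ (i,j)) N x"
proof
  assume "eigenvalue M x"
  then obtain v where v: "v \<in> carrier_vec N" "v \<noteq> 0\<^sub>v N" "M *\<^sub>v v = x \<cdot>\<^sub>v v"
    unfolding eigenvalue_def eigenvector_def using M by auto
  have "\<exists>i<N. v $ i \<noteq> 0"
  proof (rule ccontr)
    assume "\<not> ?thesis"
    hence "v = 0\<^sub>v N" using v(1) by (intro eq_vecI) auto
    thus False using v(2) by simp
  qed
  moreover have "\<forall>i<N. (\<Sum>j<N. M $$ (i,j) * v $ j) = x * v $ i"
  proof (intro allI impI)
    fix i assume i: "i < N"
    have "(M *\<^sub>v v) $ i = (x \<cdot>\<^sub>v v) $ i" using v(3) by simp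
    thus "(\<Sum>j<N. M $$ (i,j) * v $ j) = x * v $ i"
      using i M v(1) by (simp add: scalar_prod_def row_def lessThan_atLeast0)
  qed
  ultimately show "eigf (\<lambda>i j. M $$ (i,j)) N x" unfolding eigf_def by blast
next
  assume "eigf (\<lambda>i j. M $$ (i,j)) N x"
  then obtain w where w1: "\<exists>i<N. w i \<noteq> 0" and w2: "\<forall>i<N. (\<Sum>j<N. M $$ (i,j) * w j) = x * w i"
    unfolding eigf_def by auto
  define v where "v = Matrix.vec N w"
  have vc: "v \<in> carrier_vec N" unfolding v_def by simp
  have "v \<noteq> 0\<^sub>v N"
  proof
    assume "v = 0\<^sub>v N"
    hence "\<And>i. i < N \<Longrightarrow> w i = 0" unfolding v_def by (metis index_vec index_zero_vec(1))
    thus False using w1 by auto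
  qed
  moreover have "M *\<^sub>v v = x \<cdot>\<^sub>v v"
  proof (rule eq_vecI)
    fix i assume "i < dim_vec (x \<cdot>\<^sub>v v)"
    hence i: "i < N" unfolding v_def by simp
    show "(M *\<^sub>v v) $ i = (x \<cdot>\<^sub>v v) $ i"
      using i M w2 unfolding v_def by (simp add: scalar_prod_def row_def lessThan_atLeast0)
  qed (use M vc in simp)
  ultimately show "eigenvalue M x" unfolding eigenvalue_def eigenvector_def using M vc by auto
qed

lemma finite_eig:
  fixes M :: "real mat"
  assumes M: "M \<in> carrier_mat N N"
  shows "finite {x. eigenvalue M x}"
proof -
  have "char_poly M \<noteq> 0" using degree_monic_char_poly[OF M] by auto
  hence "finite {x. poly (char_poly M) x = 0}" by (rule poly_roots_finite)
  thus ?thesis using eigenvalue_root_char_poly[OF M] by simp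
qed

lemma lambda1_eigf:
  fixes M :: "real mat"
  assumes M: "M \<in> carrier_mat N N"
  shows "lambda1 M = Max {x. eigf (\<lambda>i j. M $$ (i,j)) N x}"
proof -
  have "{x. eigenvalue M x} = {x. eigf (\<lambda>i j. M $$ (i,j)) N x}" using eigenvalue_eigf[OF M] by blast
  thus ?thesis unfolding lambda1_def by simp
qed

lemma same_action:
  fixes a1 a2 :: "nat \<Rightarrow> nat \<Rightarrow> real"
  assumes SN: "S \<subseteq> {..<N}"
    and agree: "\<And>i j. i < N \<Longrightarrow> j < N \<Longrightarrow> \<not> (i \<in> S \<and> j \<in> S) \<Longrightarrow> a1 i j = a2 i j"
    and r1: "\<And>i. i \<in> S \<Longrightarrow> (\<Sum>j\<in>S. a1 i j) = t"
    and r2: "\<And>i. i \<in> S \<Longrightarrow> (\<Sum>j\<in>S. a2 i j) = t"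
    and vS: "\<forall>i\<in>S. \<forall>j\<in>S. v i = v j" and i: "i < N"
  shows "(\<Sum>j<N. a1 i j * v j) = (\<Sum>j<N. a2 i j * v j)"
proof (cases "i \<in> S")
  case True
  have c: "(\<Sum>j\<in>S. a1 i j * v j) = (\<Sum>j\<in>S. a2 i j * v j)"
  proof -
    have vv: "v j = v i" if "j \<in> S" for j using vS True that by blast
    have "(\<Sum>j\<in>S. a1 i j * v j) = (\<Sum>j\<in>S. a1 i j * v i)"
      by (rule sum.cong[OF refl]) (simp add: vv)
    also have "\<dots> = t * v i" using r1[OF True] by (simp add: sum_distrib_right[symmetric])
    also have "\<dots> = (\<Sum>j\<in>S. a2 i j * v i)" using r2[OF True] by (simp add: sum_distrib_right[symmetric])
    also have "\<dots> = (\<Sum>j\<in>S. a2 i j * v j)"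
      by (rule sum.cong[OF refl]) (simp add: vv)
    finally show ?thesis .
  qed
  have d: "(\<Sum>j\<in>{..<N}-S. a1 i j * v j) = (\<Sum>j\<in>{..<N}-S. a2 i j * v j)"
    by (rule sum.cong[OF refl]) (use agree i in auto)
  show ?thesis using sum_split_S[OF SN, of "\<lambda>j. a1 i j * v j"] sum_split_S[OF SN, of "\<lambda>j. a2 i j * v j"] c d
    by simp
next
  case False
  show ?thesis by (rule sum.cong[OF refl]) (use agree i False in auto)
qed

lemma max_equal:
  fixes a1 a2 :: "nat \<Rightarrow> nat \<Rightarrow> real"
  assumes s1: "setting a1 N S t" and s2: "setting a2 N S t"
    and agree: "\<And>i j. i < N \<Longrightarrow> j < N \<Longrightarrow> \<not> (i \<in> S \<and> j \<in> S) \<Longrightarrow> a1 i j = a2 i j"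
    and f1: "finite {x. eigf a1 N x}" and f2: "finite {x. eigf a2 N x}"
    and i0: "i0 < N" "i0 \<notin> S" and j0: "j0 \<in> S" and pos: "a1 i0 j0 > 0"
  shows "Max {x. eigf a1 N x} = Max {x. eigf a2 N x}"
proof -
  have SN: "S \<subseteq> {..<N}" using s1 unfolding setting_def by auto
  have r1: "\<And>i. i \<in> S \<Longrightarrow> (\<Sum>j\<in>S. a1 i j) = t" using s1 unfolding setting_def by auto
  have r2: "\<And>i. i \<in> S \<Longrightarrow> (\<Sum>j\<in>S. a2 i j) = t" using s2 unfolding setting_def by auto
  have CC12: "eigc a2 N S x" if h: "eigc a1 N S x" for x
  proof -
    obtain v where v1: "\<exists>i<N. v i \<noteq> 0" and v2: "\<forall>i\<in>S. \<forall>j\<in>S. v i = v j"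
      and v3: "\<forall>i<N. (\<Sum>j<N. a1 i j * v j) = x * v i" using h unfolding eigc_def by blast
    have "\<forall>i<N. (\<Sum>j<N. a2 i j * v j) = x * v i"
    proof (intro allI impI)
      fix i assume i: "i < N"
      have "(\<Sum>j<N. a1 i j * v j) = (\<Sum>j<N. a2 i j * v j)" by (rule same_action[OF SN agree r1 r2 v2 i])
      thus "(\<Sum>j<N. a2 i j * v j) = x * v i" using v3 i by simp
    qed
    thus ?thesis unfolding eigc_def using v1 v2 by blast
  qed
  have agree': "\<And>i j. i < N \<Longrightarrow> j < N \<Longrightarrow> \<not> (i \<in> S \<and> j \<in> S) \<Longrightarrow> a2 i j = a1 i j"
    using agree by (metis (no_types))
  have CC21: "eigc a1 N S x" if h: "eigc a2 N S x" for x
  proof -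
    obtain v where v1: "\<exists>i<N. v i \<noteq> 0" and v2: "\<forall>i\<in>S. \<forall>j\<in>S. v i = v j"
      and v3: "\<forall>i<N. (\<Sum>j<N. a2 i j * v j) = x * v i" using h unfolding eigc_def by blast
    have "\<forall>i<N. (\<Sum>j<N. a1 i j * v j) = x * v i"
    proof (intro allI impI)
      fix i assume i: "i < N"
      have "(\<Sum>j<N. a2 i j * v j) = (\<Sum>j<N. a1 i j * v j)" by (rule same_action[OF SN agree' r2 r1 v2 i])
      thus "(\<Sum>j<N. a1 i j * v j) = x * v i" using v3 i by simp
    qed
    thus ?thesis unfolding eigc_def using v1 v2 by blast
  qed
  have pos2: "a2 i0 j0 > 0" using agree[of i0 j0] i0 j0 SN pos by auto
  have CE1: "eigc a1 N S x \<Longrightarrow> eigf a1 N x" for x unfolding eigc_def eigf_def by blast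
  have CE2: "eigc a2 N S x \<Longrightarrow> eigf a2 N x" for x unfolding eigc_def eigf_def by blast
  have m1: "eigc a1 N S (Max {x. eigf a1 N x})" by (rule setting.max_in_C[OF s1 f1 i0 j0 pos])
  have m2: "eigc a2 N S (Max {x. eigf a2 N x})" by (rule setting.max_in_C[OF s2 f2 i0 j0 pos2])
  have "Max {x. eigf a1 N x} \<le> Max {x. eigf a2 N x}"
    using m1 CC12 CE2 f2 by (intro Max_ge) auto
  moreover have "Max {x. eigf a2 N x} \<le> Max {x. eigf a1 N x}"
    using m2 CC21 CE1 f1 by (intro Max_ge) auto
  ultimately show ?thesis by simp
qed



definition twoReg :: "graph \<Rightarrow> nat \<Rightarrow> bool" where
  "twoReg X k \<longleftrightarrow> nverts X = k \<and> (\<forall>p q. adj X p q \<longrightarrow> p<k \<and> q<k \<and> p\<noteq>q \<and> adj X q p) \<and>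
     (\<forall>p<k. card {q. q<k \<and> adj X p q} = 2)"

lemma mod_succ: "p < n \<Longrightarrow> Suc p mod (n::nat) = (if p = n - 1 then 0 else p + 1)"
  by (auto simp: mod_if)

lemma cyc_adj:
  assumes "p < n" "q < n" "n \<ge> 3"
  shows "adj (cycle_graph n) p q \<longleftrightarrow> (q = (if p = n-1 then 0 else p+1) \<or> q = (if p = 0 then n-1 else p-1))"
proof -
  have "adj (cycle_graph n) p q \<longleftrightarrow> p \<noteq> q \<and> (q = (p+1) mod n \<or> p = (q+1) mod n)"
    using assms by (simp add: adj_def cycle_graph_def)
  also have "\<dots> \<longleftrightarrow> (q = (if p = n-1 then 0 else p+1) \<or> q = (if p = 0 then n-1 else p-1))"
    using assms by (simp add: mod_succ) (auto split: if_splits)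
  finally show ?thesis .
qed

lemma twoReg_cycle: assumes "n \<ge> 3" shows "twoReg (cycle_graph n) n"
proof -
  have nv: "nverts (cycle_graph n) = n" by (simp add: nverts_def cycle_graph_def)
  have b: "\<forall>p q. adj (cycle_graph n) p q \<longrightarrow> p<n \<and> q<n \<and> p\<noteq>q \<and> adj (cycle_graph n) q p"
    by (auto simp: adj_def cycle_graph_def)
  have c: "card {q. q<n \<and> adj (cycle_graph n) p q} = 2" if p: "p < n" for p
  proof -
    define s where "s = (if p = n-1 then 0 else p+1)"
    define r where "r = (if p = 0 then n-1 else p-1)"
    have "{q. q<n \<and> adj (cycle_graph n) p q} = {s, r}"
      using p assms cyc_adj[OF p _ assms] unfolding s_def r_def by auto
    moreover have "s \<noteq> r" using p assms unfolding s_def r_def by auto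
    ultimately show ?thesis by simp
  qed
  show ?thesis unfolding twoReg_def using nv b c by blast
qed

lemma twoReg_union:
  assumes X: "twoReg X a" and Y: "twoReg Y b"
  shows "twoReg (disj_union X Y) (a + b)"
proof -
  have nX: "nverts X = a" and nY: "nverts Y = b" using X Y unfolding twoReg_def by auto
  have adjU: "adj (disj_union X Y) p q \<longleftrightarrow> (p < a \<and> q < a \<and> adj X p q) \<or> (a \<le> p \<and> a \<le> q \<and> adj Y (p - a) (q - a))" for p q
    by (simp add: adj_def disj_union_def nX)
  have "nverts (disj_union X Y) = nverts X + nverts Y" by (simp add: nverts_def disj_union_def)
  hence nv: "nverts (disj_union X Y) = a + b" using nX nY by simp
  have bX: "\<And>p q. adj X p q \<Longrightarrow> p<a \<and> q<a \<and> p\<noteq>q \<and> adj X q p" using X unfolding twoReg_def by blast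
  have bY: "\<And>p q. adj Y p q \<Longrightarrow> p<b \<and> q<b \<and> p\<noteq>q \<and> adj Y q p" using Y unfolding twoReg_def by blast
  have cX: "\<And>p. p < a \<Longrightarrow> card {q. q<a \<and> adj X p q} = 2" using X unfolding twoReg_def by blast
  have cY: "\<And>p. p < b \<Longrightarrow> card {q. q<b \<and> adj Y p q} = 2" using Y unfolding twoReg_def by blast
  have bnd: "\<forall>p q. adj (disj_union X Y) p q \<longrightarrow> p<a+b \<and> q<a+b \<and> p\<noteq>q \<and> adj (disj_union X Y) q p"
  proof (intro allI impI)
    fix p q assume "adj (disj_union X Y) p q"
    hence "(p < a \<and> q < a \<and> adj X p q) \<or> (a \<le> p \<and> a \<le> q \<and> adj Y (p - a) (q - a))" using adjU by simp
    thus "p<a+b \<and> q<a+b \<and> p\<noteq>q \<and> adj (disj_union X Y) q p"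
    proof
      assume h: "p < a \<and> q < a \<and> adj X p q"
      thus ?thesis using bX[of p q] adjU[of q p] by auto
    next
      assume h: "a \<le> p \<and> a \<le> q \<and> adj Y (p - a) (q - a)"
      thus ?thesis using bY[of "p-a" "q-a"] adjU[of q p] by auto
    qed
  qed
  have card: "card {q. q<a+b \<and> adj (disj_union X Y) p q} = 2" if p: "p < a + b" for p
  proof (cases "p < a")
    case True
    have "{q. q<a+b \<and> adj (disj_union X Y) p q} = {q. q<a \<and> adj X p q}"
      using True adjU bX by fastforce
    then show ?thesis using cX[OF True] by simp
  next
    case False
    have "{q. q<a+b \<and> adj (disj_union X Y) p q} = (\<lambda>q. q + a) ` {q. q<b \<and> adj Y (p-a) q}"
    proof (rule equalityI; rule subsetI)
      fix q assume "q \<in> {q. q<a+b \<and> adj (disj_union X Y) p q}"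
      hence q: "q < a + b" "adj (disj_union X Y) p q" by auto
      hence "a \<le> q \<and> adj Y (p - a) (q - a)" using False adjU by auto
      thus "q \<in> (\<lambda>q. q + a) ` {q. q<b \<and> adj Y (p-a) q}" using q(1)
        by (intro image_eqI[of _ _ "q - a"]) auto
    next
      fix q assume "q \<in> (\<lambda>q. q + a) ` {q. q<b \<and> adj Y (p-a) q}"
      then obtain q' where "q = q' + a" "q' < b" "adj Y (p-a) q'" by auto
      thus "q \<in> {q. q<a+b \<and> adj (disj_union X Y) p q}" using False adjU by auto
    qed
    also have "card \<dots> = card {q. q<b \<and> adj Y (p-a) q}" by (rule card_image) (simp add: inj_on_def)
    finally show ?thesis using cY[of "p-a"] p False by simp
  qed
  show ?thesis unfolding twoReg_def using nv bnd card by blast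
qed



definition base :: "nat \<Rightarrow> nat \<Rightarrow> nat \<Rightarrow> graph \<Rightarrow> nat \<Rightarrow> nat \<Rightarrow> bool" where
  "base m k h H i j \<longleftrightarrow> (i<m \<and> j<m \<and> i\<noteq>j) \<or> (i<m \<and> m\<le>j \<and> j<m+k+h) \<or> (j<m \<and> m\<le>i \<and> i<m+k+h)
     \<or> (m+k\<le>i \<and> m+k\<le>j \<and> adj H (i-m-k) (j-m-k))"

lemma adj_pair: "adj (a, f) = f" by (simp add: adj_def)
lemma nv_pair: "nverts (a, f) = a" by (simp add: nverts_def)

lemma adj_du: "adj (disj_union G H) i j \<longleftrightarrow> (i<nverts G \<and> j<nverts G \<and> adj G i j) \<or>
   (nverts G \<le> i \<and> nverts G \<le> j \<and> adj H (i - nverts G) (j - nverts G))"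
  by (simp add: disj_union_def adj_pair)

lemma nv_du: "nverts (disj_union G H) = nverts G + nverts H"
  by (simp add: disj_union_def nv_pair)

lemma adj_gj: "adj (graph_join G H) i j \<longleftrightarrow> adj (disj_union G H) i j \<or>
     (i < nverts G \<and> nverts G \<le> j \<and> j < nverts G + nverts H) \<or>
     (j < nverts G \<and> nverts G \<le> i \<and> i < nverts G + nverts H)"
  by (simp add: graph_join_def adj_pair)

lemma nv_gj: "nverts (graph_join G H) = nverts G + nverts H"
  by (simp add: graph_join_def nv_pair)

lemma nv_join: assumes "twoReg X k" "nverts H = h"
  shows "nverts (graph_join (complete_graph m) (disj_union X H)) = m + k + h"
proof -
  have "nverts X = k" using assms unfolding twoReg_def by simp
  thus ?thesis using assms(2) by (simp add: nv_gj nv_du nv_pair complete_graph_def)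
qed

lemma adj_join: assumes X: "twoReg X k" and H: "nverts H = h"
  shows "adj (graph_join (complete_graph m) (disj_union X H)) i j \<longleftrightarrow>
    base m k h H i j \<or> (i \<in> {m..<m+k} \<and> j \<in> {m..<m+k} \<and> adj X (i-m) (j-m))"
proof -
  have nX: "nverts X = k" using X unfolding twoReg_def by simp
  have bX: "\<And>p q. adj X p q \<Longrightarrow> p<k \<and> q<k" using X unfolding twoReg_def by blast
  have nK: "nverts (complete_graph m) = m" by (simp add: nv_pair complete_graph_def)
  have aK: "adj (complete_graph m) i j \<longleftrightarrow> i<m \<and> j<m \<and> i\<noteq>j" for i j by (simp add: adj_pair complete_graph_def)
  have nD: "nverts (disj_union X H) = k + h" using nX H by (simp add: nv_du)
  have aD: "adj (disj_union X H) p q \<longleftrightarrow> (p<k \<and> q<k \<and> adj X p q) \<or> (k\<le>p \<and> k\<le>q \<and> adj H (p-k) (q-k))" for p q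
    using nX by (simp add: adj_du)
  have aU: "adj (disj_union (complete_graph m) (disj_union X H)) i j \<longleftrightarrow>
     (i<m \<and> j<m \<and> adj (complete_graph m) i j) \<or> (m\<le>i \<and> m\<le>j \<and> adj (disj_union X H) (i-m) (j-m))"
    using nK by (simp add: adj_du)
  have aJ: "adj (graph_join (complete_graph m) (disj_union X H)) i j \<longleftrightarrow>
     adj (disj_union (complete_graph m) (disj_union X H)) i j \<or> (i<m \<and> m\<le>j \<and> j<m+(k+h)) \<or> (j<m \<and> m\<le>i \<and> i<m+(k+h))"
    using nK nD by (simp add: adj_gj)
  show ?thesis
  proof (cases "i < m")
    case True
    then show ?thesis unfolding aJ aU aK base_def by auto
  next
    case F1: False
    show ?thesis
    proof (cases "j < m")
      case True
      then show ?thesis using F1 unfolding aJ aU aK base_def by auto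
    next
      case F2: False
      have "adj (graph_join (complete_graph m) (disj_union X H)) i j \<longleftrightarrow> adj (disj_union X H) (i-m) (j-m)"
        unfolding aJ aU using F1 F2 by auto
      also have "\<dots> \<longleftrightarrow> (i-m<k \<and> j-m<k \<and> adj X (i-m) (j-m)) \<or> (k\<le>i-m \<and> k\<le>j-m \<and> adj H (i-m-k) (j-m-k))"
        by (rule aD)
      also have "\<dots> \<longleftrightarrow> base m k h H i j \<or> (i \<in> {m..<m+k} \<and> j \<in> {m..<m+k} \<and> adj X (i-m) (j-m))"
        unfolding base_def using F1 F2 bX[of "i-m" "j-m"] by auto
      finally show ?thesis .
    qed
  qed
qed



locale jg =
  fixes m k h :: nat and X H :: graph
  assumes X: "twoReg X k" and H: "simple_graph H" and hH: "nverts H = h"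
begin

abbreviation "G \<equiv> graph_join (complete_graph m) (disj_union X H)"
abbreviation "S \<equiv> {m..<m+k}"

lemma nvG: "nverts G = m + k + h" by (rule nv_join[OF X hH])

lemma adjG: "adj G i j \<longleftrightarrow> base m k h H i j \<or> (i \<in> S \<and> j \<in> S \<and> adj X (i-m) (j-m))"
  by (rule adj_join[OF X hH])

lemma Xsym: "adj X p q \<Longrightarrow> adj X q p \<and> p \<noteq> q \<and> p < k \<and> q < k"
  using X unfolding twoReg_def by blast

lemma Hsym: "adj H p q \<Longrightarrow> adj H q p \<and> p \<noteq> q"
  using H unfolding simple_graph_def by blast

lemma Gsym: "adj G i j \<longleftrightarrow> adj G j i"
proof -
  have "base m k h H i j \<longleftrightarrow> base m k h H j i" unfolding base_def using Hsym by blast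
  moreover have "adj X (i-m) (j-m) \<longleftrightarrow> adj X (j-m) (i-m)" using Xsym by blast
  ultimately show ?thesis unfolding adjG by blast
qed

lemma Girr: "\<not> adj G i i"
proof -
  have "\<not> base m k h H i i" unfolding base_def using Hsym by auto
  moreover have "\<not> adj X (i-m) (i-m)" using Xsym by blast
  ultimately show ?thesis unfolding adjG by blast
qed

lemma rowS: assumes "i \<in> S" shows "adj G i j \<longleftrightarrow> j < m \<or> (j \<in> S \<and> adj X (i-m) (j-m))"
proof -
  have "base m k h H i j \<longleftrightarrow> j < m" using assms unfolding base_def by auto
  thus ?thesis unfolding adjG using assms by blast
qed

lemma notS: assumes "i < m + k + h" "i \<notin> S" "j \<in> S" shows "adj G i j \<longleftrightarrow> i < m"
proof -
  have "base m k h H i j \<longleftrightarrow> i < m" using assms unfolding base_def by auto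
  thus ?thesis unfolding adjG using assms by blast
qed

lemma nbr_image: assumes "i \<in> S"
  shows "{j. j \<in> S \<and> adj G i j} = (\<lambda>q. q + m) ` {q. q < k \<and> adj X (i-m) q}"
proof (rule equalityI; rule subsetI)
  fix j assume "j \<in> {j. j \<in> S \<and> adj G i j}"
  hence j1: "j \<in> S" and j2: "adj G i j" by auto
  have "\<not> j < m" using j1 by simp
  hence j3: "adj X (i-m) (j-m)" using j2 rowS[OF assms, of j] by blast
  have "j = (j - m) + m" "j - m < k" using j1 by auto
  thus "j \<in> (\<lambda>q. q + m) ` {q. q < k \<and> adj X (i-m) q}" using j3 by blast
next
  fix j assume "j \<in> (\<lambda>q. q + m) ` {q. q < k \<and> adj X (i-m) q}"
  then obtain q where q: "j = q + m" "q < k" "adj X (i-m) q" by auto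
  have "j \<in> S" using q by simp
  moreover have "adj X (i-m) (j-m)" using q by simp
  ultimately show "j \<in> {j. j \<in> S \<and> adj G i j}" using rowS[OF assms, of j] by blast
qed

lemma cardS: assumes "i \<in> S" shows "card {j. j \<in> S \<and> adj G i j} = 2"
proof -
  have "card {j. j \<in> S \<and> adj G i j} = card {q. q < k \<and> adj X (i-m) q}"
    unfolding nbr_image[OF assms] by (rule card_image) (simp add: inj_on_def)
  also have "\<dots> = 2" using X assms unfolding twoReg_def by auto
  finally show ?thesis .
qed

lemma degS: assumes "i \<in> S" shows "degree G i = m + 2"
proof -
  have "{j. j < nverts G \<and> adj G i j} = {..<m} \<union> {j. j \<in> S \<and> adj G i j}"
  proof (rule equalityI; rule subsetI)
    fix j assume "j \<in> {j. j < nverts G \<and> adj G i j}"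
    hence "adj G i j" by simp
    hence "j < m \<or> (j \<in> S \<and> adj G i j)" using rowS[OF assms, of j] by blast
    thus "j \<in> {..<m} \<union> {j. j \<in> S \<and> adj G i j}" by blast
  next
    fix j assume "j \<in> {..<m} \<union> {j. j \<in> S \<and> adj G i j}"
    hence "j < m \<or> (j \<in> S \<and> adj G i j)" by blast
    moreover have "j < m \<Longrightarrow> adj G i j" using rowS[OF assms, of j] by blast
    ultimately have "adj G i j" "j < m + k" by auto
    thus "j \<in> {j. j < nverts G \<and> adj G i j}" unfolding nvG by simp
  qed
  moreover have "{..<m} \<inter> {j. j \<in> S \<and> adj G i j} = {}" by auto
  moreover have "finite {j. j \<in> S \<and> adj G i j}" by simp
  ultimately have "card {j. j < nverts G \<and> adj G i j} = m + card {j. j \<in> S \<and> adj G i j}"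
    by (simp add: card_Un_disjoint)
  thus ?thesis unfolding degree_def cardS[OF assms] by simp
qed

end

lemma cross_agree:
  assumes j1: "jg k h X1 H" and j2: "jg k h X2 H" and ij: "\<not> (i \<in> {m..<m+k} \<and> j \<in> {m..<m+k})"
  shows "adj (graph_join (complete_graph m) (disj_union X1 H)) i j \<longleftrightarrow>
         adj (graph_join (complete_graph m) (disj_union X2 H)) i j"
  using jg.adjG[OF j1, where m=m and i=i and j=j] jg.adjG[OF j2, where m=m and i=i and j=j] ij by blast

lemma deg_agree:
  assumes j1: "jg k h X1 H" and j2: "jg k h X2 H"
  shows "degree (graph_join (complete_graph m) (disj_union X1 H)) i =
         degree (graph_join (complete_graph m) (disj_union X2 H)) i"
proof (cases "i \<in> {m..<m+k}")
  case True
  then show ?thesis using jg.degS[OF j1 True] jg.degS[OF j2 True] by simp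
next
  case False
  have "{j. j < m+k+h \<and> adj (graph_join (complete_graph m) (disj_union X1 H)) i j} =
        {j. j < m+k+h \<and> adj (graph_join (complete_graph m) (disj_union X2 H)) i j}"
  proof (rule Collect_cong)
    fix j show "(j < m+k+h \<and> adj (graph_join (complete_graph m) (disj_union X1 H)) i j) =
        (j < m+k+h \<and> adj (graph_join (complete_graph m) (disj_union X2 H)) i j)"
    proof -
      have "\<not> (i \<in> {m..<m+k} \<and> j \<in> {m..<m+k})" using False by blast
      from cross_agree[OF j1 j2 this] show ?thesis by simp
    qed
  qed
  thus ?thesis unfolding degree_def jg.nvG[OF j1] jg.nvG[OF j2] by simp
qed



lemma sum_ind_card:
  assumes "finite A"
  shows "(\<Sum>j\<in>A. (c::real) * (if P j then 1 else 0)) = c * real (card {j\<in>A. P j})"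
proof -
  have "(\<Sum>j\<in>A. (if P j then 1 else 0::real)) = (\<Sum>j\<in>{j\<in>A. P j}. 1)"
    using sum.inter_filter[OF assms, of "\<lambda>_. 1::real" P] by simp
  thus ?thesis by (simp add: sum_distrib_left[symmetric])
qed

context jg
begin

lemma carrierA: "A_alpha \<alpha> G \<in> carrier_mat (m+k+h) (m+k+h)"
  unfolding A_alpha_def nvG by simp

lemma entryA: assumes "i < m+k+h" "j < m+k+h"
  shows "A_alpha \<alpha> G $$ (i,j) = (if i = j then \<alpha> * real (degree G i) else 0) + (1-\<alpha>) * (if adj G i j then 1 else 0)"
  unfolding A_alpha_def nvG using assms by simp

lemma setting_G:
  assumes a0: "0 \<le> \<alpha>" and a1: "\<alpha> \<le> 1" and kp: "k > 0"
  shows "setting (\<lambda>i j. A_alpha \<alpha> G $$ (i,j)) (m+k+h) S (\<alpha> * (m+2) + (1-\<alpha>)*2)"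
proof (unfold_locales)
  fix i j assume "i < m+k+h" "j < m+k+h"
  thus "A_alpha \<alpha> G $$ (i,j) = A_alpha \<alpha> G $$ (j,i)" using entryA Gsym by simp
next
  fix i j assume "i < m+k+h" "j < m+k+h"
  thus "0 \<le> A_alpha \<alpha> G $$ (i,j)" using entryA a0 a1 by simp
next
  show "S \<subseteq> {..<m+k+h}" by auto
next
  show "S \<noteq> {}" using kp by simp
next
  fix i assume i: "i \<in> S"
  have "(\<Sum>j\<in>S. A_alpha \<alpha> G $$ (i,j)) =
        (\<Sum>j\<in>S. (if i = j then \<alpha> * real (degree G i) else 0) + (1-\<alpha>) * (if adj G i j then 1 else 0))"
    by (rule sum.cong[OF refl]) (use i entryA in auto)
  also have "\<dots> = \<alpha> * real (degree G i) + (1-\<alpha>) * real (card {j\<in>S. adj G i j})"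
    using i by (simp add: sum.distrib sum_ind_card)
  also have "\<dots> = \<alpha> * (m+2) + (1-\<alpha>)*2" using degS[OF i] cardS[OF i] by simp
  finally show "(\<Sum>j\<in>S. A_alpha \<alpha> G $$ (i,j)) = \<alpha> * (m+2) + (1-\<alpha>)*2" .
next
  fix i j j' assume i: "i < m+k+h" "i \<notin> S" and j: "j \<in> S" "j' \<in> S"
  have "A_alpha \<alpha> G $$ (i,j) = (1-\<alpha>) * (if i < m then 1 else 0)"
    using entryA[OF i(1), of j] notS[OF i j(1)] i j by auto
  moreover have "A_alpha \<alpha> G $$ (i,j') = (1-\<alpha>) * (if i < m then 1 else 0)"
    using entryA[OF i(1), of j'] notS[OF i j(2)] i j by auto
  ultimately show "A_alpha \<alpha> G $$ (i,j) = A_alpha \<alpha> G $$ (i,j')" by simp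
qed

end

theorem mainTheorem17:
  fixes \<alpha> :: real and m n n1 n2 :: nat and H1 :: graph
  assumes "0 \<le> \<alpha>" "\<alpha> \<le> 1" "m \<ge> 1" "n1 \<ge> 3" "n2 \<ge> 3"
    and "simple_graph H1" "n1 + n2 \<le> n" "nverts H1 = n - n1 - n2"
  shows "lambda1 (A_alpha \<alpha> (graph_join (complete_graph m)
            (disj_union (disj_union (cycle_graph n1) (cycle_graph n2)) H1)))
       = lambda1 (A_alpha \<alpha> (graph_join (complete_graph m)
            (disj_union (cycle_graph (n1 + n2)) H1)))"
proof -
  define k where "k = n1 + n2"
  define h where "h = nverts H1"
  define X1 where "X1 = disj_union (cycle_graph n1) (cycle_graph n2)"
  define X2 where "X2 = cycle_graph (n1 + n2)"
  have T1: "twoReg X1 k" unfolding X1_def k_def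
    by (rule twoReg_union[OF twoReg_cycle twoReg_cycle]) (use assms in auto)
  have T2: "twoReg X2 k" unfolding X2_def k_def by (rule twoReg_cycle) (use assms in auto)
  have j1: "jg k h X1 H1" unfolding jg_def using T1 assms(6) h_def by simp
  have j2: "jg k h X2 H1" unfolding jg_def using T2 assms(6) h_def by simp
  have kp: "k > 0" unfolding k_def using assms by simp
  define G1 where "G1 = graph_join (complete_graph m) (disj_union X1 H1)"
  define G2 where "G2 = graph_join (complete_graph m) (disj_union X2 H1)"
  define N where "N = m + k + h"
  define S where "S = {m..<m+k}"
  have C1: "A_alpha \<alpha> G1 \<in> carrier_mat N N" unfolding G1_def N_def by (rule jg.carrierA[OF j1])
  have C2: "A_alpha \<alpha> G2 \<in> carrier_mat N N" unfolding G2_def N_def by (rule jg.carrierA[OF j2])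
  have E1: "A_alpha \<alpha> G1 $$ (i,j) = (if i = j then \<alpha> * real (degree G1 i) else 0) + (1-\<alpha>) * (if adj G1 i j then 1 else 0)"
    if "i < N" "j < N" for i j unfolding G1_def using jg.entryA[OF j1] that unfolding N_def by blast
  have E2: "A_alpha \<alpha> G2 $$ (i,j) = (if i = j then \<alpha> * real (degree G2 i) else 0) + (1-\<alpha>) * (if adj G2 i j then 1 else 0)"
    if "i < N" "j < N" for i j unfolding G2_def using jg.entryA[OF j2] that unfolding N_def by blast
  have degeq: "degree G1 i = degree G2 i" for i unfolding G1_def G2_def by (rule deg_agree[OF j1 j2])
  have adjeq: "adj G1 i j = adj G2 i j" if "\<not> (i \<in> S \<and> j \<in> S)" for i j
    unfolding G1_def G2_def using cross_agree[OF j1 j2] that unfolding S_def by blast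
  have main: "lambda1 (A_alpha \<alpha> G1) = lambda1 (A_alpha \<alpha> G2)"
  proof (cases "\<alpha> = 1")
    case True
    have "A_alpha \<alpha> G1 = A_alpha \<alpha> G2"
    proof (rule eq_matI)
      fix i j assume "i < dim_row (A_alpha \<alpha> G2)" "j < dim_col (A_alpha \<alpha> G2)"
      hence ij: "i < N" "j < N" using C2 by auto
      show "A_alpha \<alpha> G1 $$ (i,j) = A_alpha \<alpha> G2 $$ (i,j)" using E1[OF ij] E2[OF ij] degeq True by simp
    qed (use C1 C2 in auto)
    thus ?thesis by simp
  next
    case False
    hence al: "\<alpha> < 1" using assms by simp
    define a1 where "a1 = (\<lambda>i j. A_alpha \<alpha> G1 $$ (i,j))"
    define a2 where "a2 = (\<lambda>i j. A_alpha \<alpha> G2 $$ (i,j))"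
    define t where "t = \<alpha> * (m+2) + (1-\<alpha>)*2"
    have s1: "setting a1 N S t" unfolding a1_def N_def S_def t_def G1_def
      by (rule jg.setting_G[OF j1 assms(1,2) kp])
    have s2: "setting a2 N S t" unfolding a2_def N_def S_def t_def G2_def
      by (rule jg.setting_G[OF j2 assms(1,2) kp])
    have agree: "a1 i j = a2 i j" if "i < N" "j < N" "\<not> (i \<in> S \<and> j \<in> S)" for i j
      unfolding a1_def a2_def using E1[OF that(1,2)] E2[OF that(1,2)] degeq adjeq[OF that(3)] by simp
    have f1: "finite {x. eigf a1 N x}"
      using finite_eig[OF C1] eigenvalue_eigf[OF C1] unfolding a1_def by simp
    have f2: "finite {x. eigf a2 N x}"
      using finite_eig[OF C2] eigenvalue_eigf[OF C2] unfolding a2_def by simp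
    have i0: "0 < N" "0 \<notin> S" using assms(3) kp unfolding N_def S_def by auto
    have j0: "m \<in> S" using kp unfolding S_def by simp
    have "adj G1 0 m" unfolding G1_def using jg.notS[OF j1, of 0 m m] assms(3) kp by simp
    hence pos: "a1 0 m > 0" unfolding a1_def using E1[of 0 m] i0 j0 al assms(3) unfolding N_def S_def by simp
    have "Max {x. eigf a1 N x} = Max {x. eigf a2 N x}"
      by (rule max_equal[OF s1 s2 agree f1 f2 i0 j0 pos])
    thus ?thesis using lambda1_eigf[OF C1] lambda1_eigf[OF C2] unfolding a1_def a2_def by simp
  qed
  thus ?thesis unfolding G1_def G2_def X1_def X2_def .
qed


end
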